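(* Let $i\in K$, let $w$ be a strong minuscule element with $\Lambda_w=\Lambda_i$, and let $w=s_{i_1}\cdots s_{i_r}$ be a reduced expression of $w$ (so that $i_r=i$). For each $1\le p\le r-1$ put $u_p:=\#\{p+1\le a\le r\mid i_a\in\operatorname{adj}_s(i_p)\}$. Then $u_p$ is a nonnegative even integer if $i_p=i$, and $u_p$ is a positive odd integer if $i_p\ne i$.
   Context: Let $\mathfrak g$ be a finite-dimensional simple Lie algebra over $\mathbb C$ of type $\mathrm A_n$, $\mathrm B_n$, $\mathrm C_n$ or $\mathrm D_n$, with index set $I=\{1,\dots,n\}$, simple roots $\alpha_i$, simple coroots $\alpha_i^\vee$, Cartan matrix $a_{ij}=\langle\alpha_j,\alpha_i^\vee\rangle$, fundamental weights $\Lambda_i$, integral weights $P=\bigoplus_i\mathbb Z\Lambda_i$, dominant integral weights $P^+=\sum_i\mathbb Z_{\ge0}\Lambda_i$, Weyl group $W$ generated by simple reflections $s_i$. The Dynkin diagrams are labeled as follows: type $\mathrm A_n$: chain $1-2-\cdots-n$; type $\mathrm B_n$: chain $1-2-\cdots-n$ with a double bond between $1$ and $2$, $\alpha_1$ short and $\alpha_2,\dots,\alpha_n$ long; type $\mathrm C_n$: chain $1-2-\cdots-n$ with a double bond between $1$ and $2$, $\alpha_1$ long and $\alpha_2,\dots,\alpha_n$ short; type $\mathrm D_n$: chain $n-(n-1)-\cdots-3$ with node $3$ joined to both nodes $1$ and $2$. Set $K=I$ in types $\mathrm A_n,\mathrm D_n$, $K=\{1\}$ in type $\mathrm B_n$,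 $K=I\setminus\{1\}$ in type $\mathrm C_n$. For $j\in I$, $\operatorname{adj}_s(j):=\{m\in I\mid a_{jm}=-1\}$. For $\Lambda\in P$, $w\in W$ is $\Lambda$-minuscule if there is a reduced expression $w=s_{i_1}\cdots s_{i_r}$ with $\langle s_{i_{p+1}}\cdots s_{i_r}(\Lambda),\alpha_{i_p}^\vee\rangle=1$ for all $1\le p\le r$ (this then holds for every reduced expression); $w$ is dominant minuscule if it is $\Lambda$-minuscule for some $\Lambda\in P^+$. A dominant minuscule $w$ is strong minuscule if there is a unique $\Lambda\in P^+$, denoted $\Lambda_w$, such that $w$ is $\Lambda$-minuscule. It is known that for a strong minuscule $w$ with $\Lambda_w=\Lambda_i$, every reduced expression of $w$ ends with $s_i$. *)

theory Defs
  imports Main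
begin

datatype ctype = TA | TB | TC | TD

definition valid_type :: "ctype \<Rightarrow> nat \<Rightarrow> bool" where
  "valid_type t n = (case t of TA \<Rightarrow> n \<ge> 1 | TB \<Rightarrow> n \<ge> 2 | TC \<Rightarrow> n \<ge> 2 | TD \<Rightarrow> n \<ge> 4)"

definition Iset :: "nat \<Rightarrow> nat set" where
  "Iset n = {1..n}"

text \<open>Simply-laced adjacency in the Dynkin diagram (ignoring multiplicities).\<close>
definition dyn_edge :: "ctype \<Rightarrow> nat \<Rightarrow> nat \<Rightarrow> bool" where
  "dyn_edge t i j = (case t of
      TD \<Rightarrow> ({i, j} = {1, 3} \<or> {i, j} = {2, 3} \<or> (3 \<le> i \<and> 3 \<le> j \<and> (i = j + 1 \<or> j = i + 1)))
    | _ \<Rightarrow> (i = j + 1 \<or> j = i + 1))"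

text \<open>Cartan matrix a_ij = <alpha_j, alpha_i^vee>, zero outside I x I.
  Type B: alpha_1 short, alpha_2 long, so a_12 = -2, a_21 = -1.
  Type C: alpha_1 long, alpha_2 short, so a_12 = -1, a_21 = -2.\<close>
definition cartan :: "ctype \<Rightarrow> nat \<Rightarrow> nat \<Rightarrow> nat \<Rightarrow> int" where
  "cartan t n i j =
     (if i \<notin> Iset n \<or> j \<notin> Iset n then 0
      else if i = j then 2
      else if \<not> dyn_edge t i j then 0
      else if t = TB \<and> i = 1 \<and> j = 2 then -2
      else if t = TC \<and> i = 2 \<and> j = 1 then -2
      else -1)"

definition Kset :: "ctype \<Rightarrow> nat \<Rightarrow> nat set" where
  "Kset t n = (case t of TA \<Rightarrow> Iset n | TD \<Rightarrow> Iset n | TB \<Rightarrow> {1} | TC \<Rightarrow> Iset n - {1})"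

definition adj_s :: "ctype \<Rightarrow> nat \<Rightarrow> nat \<Rightarrow> nat set" where
  "adj_s t n j = {m \<in> Iset n. cartan t n j m = -1}"

text \<open>A weight lambda is encoded by its coordinates lambda j = <lambda, alpha_j^vee>;
  P is the lattice of integral weights (coordinates supported on I).\<close>
definition Pset :: "nat \<Rightarrow> (nat \<Rightarrow> int) set" where
  "Pset n = {lam. \<forall>j. j \<notin> Iset n \<longrightarrow> lam j = 0}"

definition Pplus :: "nat \<Rightarrow> (nat \<Rightarrow> int) set" where
  "Pplus n = {lam \<in> Pset n. \<forall>j \<in> Iset n. lam j \<ge> 0}"

definition fund :: "nat \<Rightarrow> nat \<Rightarrow> int" where
  "fund i = (\<lambda>j. if j = i then 1 else 0)"

text \<open>s_i(lambda) = lambda - <lambda, alpha_i^vee> alpha_i, with <alpha_i, alpha_j^vee> = a_ji.\<close>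
definition sref :: "ctype \<Rightarrow> nat \<Rightarrow> nat \<Rightarrow> (nat \<Rightarrow> int) \<Rightarrow> (nat \<Rightarrow> int)" where
  "sref t n i lam = (\<lambda>j. lam j - lam i * cartan t n j i)"

definition word_act :: "ctype \<Rightarrow> nat \<Rightarrow> nat list \<Rightarrow> (nat \<Rightarrow> int) \<Rightarrow> (nat \<Rightarrow> int)" where
  "word_act t n ws = foldr (\<lambda>i f. sref t n i \<circ> f) ws id"

text \<open>Weyl group elements are represented faithfully by their action on P.\<close>
definition weyl_elt :: "ctype \<Rightarrow> nat \<Rightarrow> nat list \<Rightarrow> (nat \<Rightarrow> int) \<Rightarrow> (nat \<Rightarrow> int)" where
  "weyl_elt t n ws = (\<lambda>lam. if lam \<in> Pset n then word_act t n ws lam else undefined)"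

definition weyl_group :: "ctype \<Rightarrow> nat \<Rightarrow> ((nat \<Rightarrow> int) \<Rightarrow> (nat \<Rightarrow> int)) set" where
  "weyl_group t n = {weyl_elt t n ws | ws. set ws \<subseteq> Iset n}"

definition reduced_expr :: "ctype \<Rightarrow> nat \<Rightarrow> ((nat \<Rightarrow> int) \<Rightarrow> (nat \<Rightarrow> int)) \<Rightarrow> nat list \<Rightarrow> bool" where
  "reduced_expr t n w ws \<longleftrightarrow> set ws \<subseteq> Iset n \<and> weyl_elt t n ws = w \<and>
     (\<forall>vs. set vs \<subseteq> Iset n \<and> weyl_elt t n vs = w \<longrightarrow> length ws \<le> length vs)"

text \<open>w is Lambda-minuscule (list positions are 0-indexed: ws!q = i_{q+1}).\<close>
definition lam_minuscule :: "ctype \<Rightarrow> nat \<Rightarrow> (nat \<Rightarrow> int) \<Rightarrow> ((nat \<Rightarrow> int) \<Rightarrow> (nat \<Rightarrow> int)) \<Rightarrow> bool" where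
  "lam_minuscule t n Lam w \<longleftrightarrow> (\<exists>ws. reduced_expr t n w ws \<and>
     (\<forall>q < length ws. word_act t n (drop (Suc q) ws) Lam (ws ! q) = 1))"

definition dominant_minuscule :: "ctype \<Rightarrow> nat \<Rightarrow> ((nat \<Rightarrow> int) \<Rightarrow> (nat \<Rightarrow> int)) \<Rightarrow> bool" where
  "dominant_minuscule t n w \<longleftrightarrow> w \<in> weyl_group t n \<and> (\<exists>Lam \<in> Pplus n. lam_minuscule t n Lam w)"

definition strong_minuscule :: "ctype \<Rightarrow> nat \<Rightarrow> ((nat \<Rightarrow> int) \<Rightarrow> (nat \<Rightarrow> int)) \<Rightarrow> bool" where
  "strong_minuscule t n w \<longleftrightarrow> dominant_minuscule t n w \<and> (\<exists>!Lam. Lam \<in> Pplus n \<and> lam_minuscule t n Lam w)"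

definition Lambda_w :: "ctype \<Rightarrow> nat \<Rightarrow> ((nat \<Rightarrow> int) \<Rightarrow> (nat \<Rightarrow> int)) \<Rightarrow> (nat \<Rightarrow> int)" where
  "Lambda_w t n w = (THE Lam. Lam \<in> Pplus n \<and> lam_minuscule t n Lam w)"

end

theory Submission
  imports Defs
begin

locale cx = fixes t :: ctype and n :: nat
begin

abbreviation "I \<equiv> Iset n"
abbreviation "A \<equiv> cartan t n"

lemma finI: "finite I" by (simp add: Iset_def)

lemma A_out: "j \<notin> I \<or> m \<notin> I \<Longrightarrow> A j m = 0"
  by (auto simp: cartan_def)

lemma A_diag: "j \<in> I \<Longrightarrow> A j j = 2"
  by (simp add: cartan_def)

lemma dyn_sym: "dyn_edge t i j = dyn_edge t j i"
  by (cases t) (auto simp: dyn_edge_def insert_commute)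

lemma A_vals: "s \<in> I \<Longrightarrow> r \<in> I \<Longrightarrow> s \<noteq> r \<Longrightarrow>
   (A s r = 0 \<and> A r s = 0) \<or> (A s r = -1 \<and> A r s = -1) \<or> (A s r = -1 \<and> A r s = -2) \<or> (A s r = -2 \<and> A r s = -1)"
  by (auto simp: cartan_def dyn_sym)

lemma A_odd: "odd (A j m) \<longleftrightarrow> A j m = -1"
  by (auto simp: cartan_def)

lemma sum_upd:
  fixes d f :: "nat \<Rightarrow> int"
  assumes "j \<in> I"
  shows "(\<Sum>m\<in>I. (d(j := v)) m * f m) = (\<Sum>m\<in>I. d m * f m) + (v - d j) * f j"
proof -
  have "(\<Sum>m\<in>I. (d(j := v)) m * f m) = v * f j + (\<Sum>m\<in>I-{j}. d m * f m)"
    using assms finI by (simp add: sum.remove)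
  moreover have "(\<Sum>m\<in>I. d m * f m) = d j * f j + (\<Sum>m\<in>I-{j}. d m * f m)"
    using assms finI by (simp add: sum.remove)
  ultimately show ?thesis by (simp add: algebra_simps)
qed

lemma sum_two:
  assumes "s \<in> I" "r \<in> I" "s \<noteq> r" "\<forall>m\<in>I. m \<noteq> s \<and> m \<noteq> r \<longrightarrow> f m = 0"
  shows "(\<Sum>m\<in>I. f m) = f s + f r"
proof -
  have "(\<Sum>m\<in>I. f m) = (\<Sum>m\<in>{s,r}. f m)"
    using assms finI by (intro sum.mono_neutral_right) auto
  thus ?thesis using assms by simp
qed

lemma sref_invol: "sref t n j (sref t n j l) = l"
proof (cases "j \<in> I")
  case True
  then show ?thesis by (auto simp: sref_def A_diag algebra_simps)
next
  case False
  then show ?thesis by (auto simp: sref_def A_out)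
qed

lemma sref_P: "l \<in> Pset n \<Longrightarrow> sref t n j l \<in> Pset n"
  by (auto simp: sref_def Pset_def A_out)

lemma wa_Nil[simp]: "word_act t n [] = id" by (simp add: word_act_def)
lemma wa_Cons[simp]: "word_act t n (a#x) l = sref t n a (word_act t n x l)"
  by (simp add: word_act_def)
lemma wa_app: "word_act t n (x@y) l = word_act t n x (word_act t n y l)"
  by (induction x) auto
lemma wa_P: "l \<in> Pset n \<Longrightarrow> word_act t n x l \<in> Pset n"
  by (induction x) (auto simp: sref_P)
lemma wa_rev_cancel: "word_act t n (rev x) (word_act t n x l) = l"
  by (induction x arbitrary: l) (auto simp: wa_app sref_invol)
lemma wa_rev_cancel2: "word_act t n x (word_act t n (rev x) l) = l"
  using wa_rev_cancel[of "rev x"] by simp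

definition eqv :: "nat list \<Rightarrow> nat list \<Rightarrow> bool" where
  "eqv x y \<longleftrightarrow> (\<forall>l\<in>Pset n. word_act t n x l = word_act t n y l)"

lemma eqv_refl[simp]: "eqv x x" by (simp add: eqv_def)
lemma eqv_sym: "eqv x y \<Longrightarrow> eqv y x" by (simp add: eqv_def)
lemma eqv_trans[trans]: "eqv x y \<Longrightarrow> eqv y z \<Longrightarrow> eqv x z" by (simp add: eqv_def)
lemma eqv_app: "eqv x x' \<Longrightarrow> eqv y y' \<Longrightarrow> eqv (x@y) (x'@y')"
  by (simp add: eqv_def wa_app wa_P)
lemma eqv_rev: "eqv x y \<Longrightarrow> eqv (rev x) (rev y)"
  unfolding eqv_def
proof
  fix l assume h: "\<forall>l\<in>Pset n. word_act t n x l = word_act t n y l" and l: "l \<in> Pset n"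
  have "word_act t n (rev x) l = word_act t n (rev x) (word_act t n y (word_act t n (rev y) l))"
    by (simp add: wa_rev_cancel2)
  also have "\<dots> = word_act t n (rev x) (word_act t n x (word_act t n (rev y) l))"
    using h l wa_P by simp
  also have "\<dots> = word_act t n (rev y) l" by (simp add: wa_rev_cancel)
  finally show "word_act t n (rev x) l = word_act t n (rev y) l" .
qed
lemma eqv_cancel: "eqv (x @ [a,a] @ y) (x @ y)"
  by (simp add: eqv_def wa_app sref_invol)
lemma weyl_eq: "weyl_elt t n x = weyl_elt t n y \<longleftrightarrow> eqv x y"
  unfolding weyl_elt_def eqv_def by (auto simp: fun_eq_iff)


definition len :: "nat list \<Rightarrow> nat" where
  "len x = (LEAST k. \<exists>y. set y \<subseteq> I \<and> eqv y x \<and> length y = k)"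

lemma len_le: "set y \<subseteq> I \<Longrightarrow> eqv y x \<Longrightarrow> len x \<le> length y"
  unfolding len_def by (rule Least_le) blast

lemma len_ex: "set x \<subseteq> I \<Longrightarrow> \<exists>y. set y \<subseteq> I \<and> eqv y x \<and> length y = len x"
  unfolding len_def by (rule LeastI[where k="length x"]) auto

lemma len_le_length: "set x \<subseteq> I \<Longrightarrow> len x \<le> length x"
  by (rule len_le) auto

lemma len_eqv: "eqv x x' \<Longrightarrow> len x = len x'"
  unfolding len_def by (metis eqv_sym eqv_trans)

lemma len_app: "set x \<subseteq> I \<Longrightarrow> set y \<subseteq> I \<Longrightarrow> len (x@y) \<le> len x + len y"
proof -
  assume "set x \<subseteq> I" "set y \<subseteq> I"
  then obtain x' y' where "set x' \<subseteq> I" "eqv x' x" "length x' = len x"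
     "set y' \<subseteq> I" "eqv y' y" "length y' = len y" using len_ex by metis
  then show ?thesis using len_le[of "x'@y'" "x@y"] eqv_app by fastforce
qed

lemma len_single: "s \<in> I \<Longrightarrow> len [s] \<le> 1"
  using len_le_length[of "[s]"] by simp

lemma len_snoc_ge: "set x \<subseteq> I \<Longrightarrow> s \<in> I \<Longrightarrow> len x \<le> len (x@[s]) + 1"
proof -
  assume a: "set x \<subseteq> I" "s \<in> I"
  have "eqv (x@[s]@[s]) x" using eqv_cancel[of x s "[]"] by simp
  hence "len x = len ((x@[s])@[s])" using len_eqv by (metis append_assoc eqv_sym)
  also have "\<dots> \<le> len (x@[s]) + len [s]" using a by (intro len_app) auto
  finally show ?thesis using len_single[OF a(2)] by simp
qed

definition reduced :: "nat list \<Rightarrow> bool" where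
  "reduced x \<longleftrightarrow> set x \<subseteq> I \<and> len x = length x"

lemma reduced_expr_iff: "reduced_expr t n w x \<Longrightarrow> reduced x \<and> weyl_elt t n x = w"
proof -
  assume h: "reduced_expr t n w x"
  hence s: "set x \<subseteq> I" and e: "weyl_elt t n x = w" by (auto simp: reduced_expr_def)
  obtain y where y: "set y \<subseteq> I" "eqv y x" "length y = len x" using len_ex[OF s] by blast
  have "weyl_elt t n y = w" using y(2) e weyl_eq by metis
  hence "length x \<le> length y" using h y(1) by (auto simp: reduced_expr_def)
  thus ?thesis using y len_le_length[OF s] s e by (simp add: reduced_def)
qed

lemma reduced_app: "reduced (x@y) \<Longrightarrow> reduced x \<and> reduced y"
proof -
  assume h: "reduced (x@y)"
  hence s: "set x \<subseteq> I" "set y \<subseteq> I" and l: "len (x@y) = length x + length y"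
    by (auto simp: reduced_def)
  have "len x \<le> length x" "len y \<le> length y" using s len_le_length by auto
  moreover have "len (x@y) \<le> len x + len y" using s len_app by auto
  ultimately show ?thesis using s l by (simp add: reduced_def)
qed

lemma reduced_take: "reduced x \<Longrightarrow> reduced (take k x)"
  using reduced_app[of "take k x" "drop k x"] by simp
lemma reduced_drop: "reduced x \<Longrightarrow> reduced (drop k x)"
  using reduced_app[of "take k x" "drop k x"] by simp

lemma reduced_rev: "reduced x \<Longrightarrow> reduced (rev x)"
proof -
  assume h: "reduced x"
  hence s: "set (rev x) \<subseteq> I" by (auto simp: reduced_def)
  obtain y where y: "set y \<subseteq> I" "eqv y (rev x)" "length y = len (rev x)" using len_ex[OF s] by blast
  have "eqv (rev y) x" using eqv_rev[OF y(2)] by simp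
  hence "len x \<le> length y" using len_le[of "rev y" x] y(1) by simp
  thus ?thesis using h y len_le_length[OF s] s by (simp add: reduced_def)
qed

definition cs :: "nat \<Rightarrow> (nat \<Rightarrow> int) \<Rightarrow> (nat \<Rightarrow> int)" where
  "cs j d = d(j := d j - (\<Sum>m\<in>I. d m * A m j))"

primrec cact :: "nat list \<Rightarrow> (nat \<Rightarrow> int) \<Rightarrow> (nat \<Rightarrow> int)" where
  "cact [] d = d"
| "cact (a#x) d = cs a (cact x d)"

lemma cact_app: "cact (x@y) d = cact x (cact y d)"
  by (induction x) auto

lemma cs_invol: "cs j (cs j d) = d"
proof (cases "j \<in> I")
  case True
  have "(\<Sum>m\<in>I. (cs j d) m * A m j) = (\<Sum>m\<in>I. d m * A m j) - 2 * (\<Sum>m\<in>I. d m * A m j)"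
    unfolding cs_def using sum_upd[OF True, of d] True A_diag by simp
  then show ?thesis by (auto simp: cs_def fun_eq_iff)
next
  case False
  then show ?thesis by (auto simp: cs_def A_out)
qed

lemma cact_rev_cancel: "cact (rev x) (cact x d) = d"
  by (induction x arbitrary: d) (auto simp: cact_app cs_invol)
lemma cact_rev_cancel2: "cact x (cact (rev x) d) = d"
  using cact_rev_cancel[of "rev x"] by simp
lemma cact_rev_app: "cact (x @ rev x) d = d"
  by (simp add: cact_app cact_rev_cancel2)

definition smul :: "int \<Rightarrow> (nat \<Rightarrow> int) \<Rightarrow> (nat \<Rightarrow> int)" where
  "smul c d = (\<lambda>m. c * d m)"
definition addv :: "(nat \<Rightarrow> int) \<Rightarrow> (nat \<Rightarrow> int) \<Rightarrow> (nat \<Rightarrow> int)" where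
  "addv d e = (\<lambda>m. d m + e m)"

lemma cs_smul: "cs j (smul c d) = smul c (cs j d)"
  by (auto simp: cs_def smul_def fun_eq_iff sum_distrib_left algebra_simps)
lemma cs_addv: "cs j (addv d e) = addv (cs j d) (cs j e)"
  by (auto simp: cs_def addv_def fun_eq_iff sum.distrib algebra_simps)
lemma cact_smul: "cact x (smul c d) = smul c (cact x d)"
  by (induction x) (auto simp: cs_smul)
lemma cact_addv: "cact x (addv d e) = addv (cact x d) (cact x e)"
  by (induction x) (auto simp: cs_addv)

definition supp :: "(nat \<Rightarrow> int) \<Rightarrow> bool" where
  "supp d \<longleftrightarrow> (\<forall>m. m \<notin> I \<longrightarrow> d m = 0)"

lemma cs_supp: "supp d \<Longrightarrow> supp (cs j d)"
  by (auto simp: supp_def cs_def A_out)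
lemma cact_supp: "supp d \<Longrightarrow> supp (cact x d)"
  by (induction x) (auto simp: cs_supp)
lemma fund_supp: "s \<in> I \<Longrightarrow> supp (fund s)"
  by (auto simp: supp_def fund_def)

definition pair :: "(nat \<Rightarrow> int) \<Rightarrow> (nat \<Rightarrow> int) \<Rightarrow> int" where
  "pair l d = (\<Sum>m\<in>I. l m * d m)"

lemma pair_sref: "pair (sref t n j l) d = pair l (cs j d)"
proof (cases "j \<in> I")
  case True
  have "pair l (cs j d) = pair l d + (cs j d j - d j) * l j"
    unfolding pair_def cs_def using sum_upd[OF True, of d _ l] by (simp add: mult.commute)
  moreover have "pair (sref t n j l) d = pair l d - l j * (\<Sum>m\<in>I. d m * A m j)"
    unfolding pair_def sref_def by (simp add: algebra_simps sum_subtractf sum_distrib_left)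
  ultimately show ?thesis by (simp add: cs_def algebra_simps)
next
  case False
  then show ?thesis by (simp add: cs_def sref_def A_out)
qed

lemma pair_word: "pair (word_act t n x l) d = pair l (cact (rev x) d)"
  by (induction x arbitrary: d) (auto simp: pair_sref cact_app)

lemma pair_fund: "m \<in> I \<Longrightarrow> pair (fund m) d = d m"
  unfolding pair_def fund_def using finI
  by (subst sum.cong[OF refl, of _ _ "\<lambda>ma. if ma = m then d ma else 0"]) (auto simp: sum.delta)
lemma pair_fund2: "m \<in> I \<Longrightarrow> pair l (fund m) = l m"
  unfolding pair_def fund_def using finI
  by (subst sum.cong[OF refl, of _ _ "\<lambda>ma. if ma = m then l ma else 0"]) (auto simp: sum.delta)

lemma fund_P: "m \<in> I \<Longrightarrow> fund m \<in> Pset n"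
  by (auto simp: fund_def Pset_def)

lemma cact_eqv: "eqv x y \<Longrightarrow> supp d \<Longrightarrow> cact x d = cact y d"
proof
  fix m assume e: "eqv x y" and d: "supp d"
  show "cact x d m = cact y d m"
  proof (cases "m \<in> I")
    case True
    have "cact x d m = pair (word_act t n (rev x) (fund m)) d"
      using pair_word[of "rev x"] pair_fund[OF True] by simp
    also have "\<dots> = pair (word_act t n (rev y) (fund m)) d"
      using eqv_rev[OF e] fund_P[OF True] by (simp add: eqv_def)
    also have "\<dots> = cact y d m"
      using pair_word[of "rev y"] pair_fund[OF True] by simp
    finally show ?thesis .
  next
    case False
    then show ?thesis using cact_supp[OF d] by (simp add: supp_def)
  qed
qed


lemma braid2: "s \<in> I \<Longrightarrow> r \<in> I \<Longrightarrow> A s r = 0 \<Longrightarrow> A r s = 0 \<Longrightarrow>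
   word_act t n [s,r] l = word_act t n [r,s] l"
  by (auto simp: sref_def fun_eq_iff A_diag algebra_simps)

lemma braid3: "s \<in> I \<Longrightarrow> r \<in> I \<Longrightarrow> s \<noteq> r \<Longrightarrow> A s r = -1 \<Longrightarrow> A r s = -1 \<Longrightarrow>
   word_act t n [s,r,s] l = word_act t n [r,s,r] l"
  by (auto simp: sref_def fun_eq_iff A_diag algebra_simps)

lemma braid4: "s \<in> I \<Longrightarrow> r \<in> I \<Longrightarrow> s \<noteq> r \<Longrightarrow> A s r * A r s = 2 \<Longrightarrow>
   (A s r = -1 \<and> A r s = -2) \<or> (A s r = -2 \<and> A r s = -1) \<Longrightarrow>
   word_act t n [s,r,s,r] l = word_act t n [r,s,r,s] l"
  by (auto simp: sref_def fun_eq_iff A_diag algebra_simps)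


lemma sum_sr:
  assumes "s \<in> I" "r \<in> I" "s \<noteq> r" "\<forall>m. m \<noteq> s \<and> m \<noteq> r \<longrightarrow> d m = 0"
  shows "(\<Sum>m\<in>I. d m * A m j) = d s * A s j + d r * A r j"
  using sum_two[OF assms(1-3), of "\<lambda>m. d m * A m j"] assms(4) by auto

lemma eqv_wa: "(\<And>l. word_act t n x l = word_act t n y l) \<Longrightarrow> eqv x y"
  by (simp add: eqv_def)

lemma rank2:
  assumes sI: "s \<in> I" and rI: "r \<in> I" and sr: "s \<noteq> r" and u: "set u \<subseteq> {s,r}"
    and H1: "\<And>u'. set u' \<subseteq> {s,r} \<Longrightarrow> eqv u' u \<Longrightarrow> length u \<le> length u'"
    and H2: "\<And>u'. set u' \<subseteq> {s,r} \<Longrightarrow> eqv u' (u@[s]) \<Longrightarrow> length u \<le> length u'"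
  shows "0 \<le> cact u (fund s) s \<and> 0 \<le> cact u (fund s) r \<and>
         (\<forall>m. m \<noteq> s \<and> m \<noteq> r \<longrightarrow> cact u (fund s) m = 0)"
proof -
  have vals: "(A s r = 0 \<and> A r s = 0) \<or> (A s r = -1 \<and> A r s = -1) \<or> (A s r = -1 \<and> A r s = -2) \<or> (A s r = -2 \<and> A r s = -1)"
    using A_vals[OF sI rI sr] .
  have nodup: False if "u = p @ [a,a] @ q" "set u \<subseteq> {s,r}" for p q a
  proof -
    have "eqv (p@q) u" using that eqv_cancel eqv_sym by metis
    moreover have "set (p@q) \<subseteq> {s,r}" using that by auto
    ultimately show False using H1 that by fastforce
  qed
  have c1: "cs r (fund s) = (fund s)(r := - A s r)"
    unfolding cs_def using sum_sr[OF sI rI sr, of "fund s" r] sr by (simp add: fund_def)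
  have c2: "cs s ((fund s)(r := - A s r)) = (fund s)(r := - A s r, s := A s r * A r s - 1)"
    unfolding cs_def using sum_sr[OF sI rI sr, of "(fund s)(r := - A s r)" s] sr sI
    by (auto simp: fund_def A_diag fun_eq_iff algebra_simps)
  show ?thesis
  proof (cases "rev u")
    case Nil
    then show ?thesis by (simp add: fund_def)
  next
    case (Cons a r1)
    hence ua: "u = rev r1 @ [a]" by (metis rev_rev_ident rev.simps(2))
    have "a = r"
    proof (rule ccontr)
      assume "a \<noteq> r" hence "a = s" using u ua by auto
      hence "eqv (rev r1) (u@[s])" using ua eqv_cancel[of "rev r1" s "[]"] eqv_sym by simp
      moreover have "set (rev r1) \<subseteq> {s,r}" using u ua by auto
      ultimately show False using H2 ua by fastforce
    qed
    show ?thesis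
    proof (cases r1)
      case Nil
      then show ?thesis using ua \<open>a = r\<close> c1 vals sr by (auto simp: fund_def)
    next
      case (Cons b r2)
      have "b = s"
      proof (rule ccontr)
        assume "b \<noteq> s" hence "b = r" using u ua Cons by auto
        thus False using nodup[of "rev r2" r "[]"] ua Cons \<open>a = r\<close> u by simp
      qed
      have u2: "u = rev r2 @ [s,r]" using ua Cons \<open>a = r\<close> \<open>b = s\<close> by simp
      have nz: "A s r \<noteq> 0"
      proof
        assume z: "A s r = 0" hence z2: "A r s = 0" using vals by auto
        have "eqv (u@[s]) (rev r2 @ [r])"
        proof -
          have "eqv (u@[s]) (rev r2 @ [r,s] @ [s])"
            using u2 braid2[OF sI rI z z2] by (intro eqv_wa) (simp add: wa_app)
          also have "eqv \<dots> (rev r2 @ [r])"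
            using eqv_cancel[of "rev r2 @ [r]" s "[]"] by simp
          finally show ?thesis .
        qed
        moreover have "set (rev r2 @ [r]) \<subseteq> {s,r}" using u u2 by auto
        ultimately show False using H2 u2 eqv_sym by fastforce
      qed
      show ?thesis
      proof (cases r2)
        case Nil
        have "A s r * A r s \<ge> 1" using vals nz by auto
        then show ?thesis using u2 Nil c1 c2 vals sr by (auto simp: fund_def)
      next
        case (Cons c r3)
        have "c = r"
        proof (rule ccontr)
          assume "c \<noteq> r" hence "c = s" using u u2 Cons by auto
          thus False using nodup[of "rev r3" s "[r]"] u2 Cons u by simp
        qed
        have u3: "u = rev r3 @ [r,s,r]" using u2 Cons \<open>c = r\<close> by simp
        have p2: "A s r * A r s = 2"
        proof (rule ccontr)
          assume "A s r * A r s \<noteq> 2"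
          hence o: "A s r = -1" "A r s = -1" using vals nz by auto
          have "eqv (u@[s]) (rev r3 @ [s,r])"
          proof -
            have "eqv (u@[s]) (rev r3 @ [s,r] @ [s,s])"
              using u3 braid3[OF sI rI sr o] by (intro eqv_wa) (simp add: wa_app)
            also have "eqv \<dots> (rev r3 @ [s,r])"
              using eqv_cancel[of "rev r3 @ [s,r]" s "[]"] by simp
            finally show ?thesis .
          qed
          moreover have "set (rev r3 @ [s,r]) \<subseteq> {s,r}" using u u3 by auto
          ultimately show False using H2 u3 eqv_sym by fastforce
        qed
        have o2: "(A s r = -1 \<and> A r s = -2) \<or> (A s r = -2 \<and> A r s = -1)" using vals p2 by auto
        show ?thesis
        proof (cases r3)
          case Nil
          define e where "e = (fund s)(r := - A s r, s := A s r * A r s - 1)"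
          have es: "e s = 1" "e r = - A s r" "\<forall>m. m \<noteq> s \<and> m \<noteq> r \<longrightarrow> e m = 0"
            using p2 sr by (auto simp: e_def fund_def)
          have "(\<Sum>m\<in>I. e m * A m r) = - A s r"
            using sum_sr[OF sI rI sr es(3), of r] es A_diag[OF rI] by simp
          hence "cs r e = fund s" using es sr by (auto simp: cs_def fund_def fun_eq_iff)
          hence "cs r ((fund s)(r := - A s r, s := A s r * A r s - 1)) = fund s" by (simp add: e_def)
          then show ?thesis using u3 Nil c1 c2 sr by (auto simp: fund_def)
        next
          case (Cons d r4)
          have "d = s"
          proof (rule ccontr)
            assume "d \<noteq> s" hence "d = r" using u u3 Cons by auto
            thus False using nodup[of "rev r4" r "[s,r]"] u3 Cons u by simp
          qed
          have u4: "u = rev r4 @ [s,r,s,r]" using u3 Cons \<open>d = s\<close> by simp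
          have "eqv (u@[s]) (rev r4 @ [r,s,r])"
          proof -
            have "eqv (u@[s]) (rev r4 @ [r,s,r] @ [s,s])"
              using u4 braid4[OF sI rI sr p2 o2] by (intro eqv_wa) (simp add: wa_app)
            also have "eqv \<dots> (rev r4 @ [r,s,r])"
              using eqv_cancel[of "rev r4 @ [r,s,r]" s "[]"] by simp
            finally show ?thesis .
          qed
          moreover have "set (rev r4 @ [r,s,r]) \<subseteq> {s,r}" using u u4 by auto
          ultimately have False using H2 u4 eqv_sym by fastforce
          thus ?thesis ..
        qed
      qed
    qed
  qed
qed


lemma T_main:
  "set w \<subseteq> I \<Longrightarrow> s \<in> I \<Longrightarrow> len w \<le> len (w@[s]) \<Longrightarrow> \<forall>m. 0 \<le> cact w (fund s) m"
proof (induction "len w" arbitrary: w s rule: less_induct)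
  case less
  note wI = less.prems(1) and sI = less.prems(2) and ge = less.prems(3)
  obtain y where y: "set y \<subseteq> I" "eqv y w" "length y = len w" using len_ex[OF wI] by blast
  show ?case
  proof (cases "len w = 0")
    case True
    hence "y = []" using y by simp
    hence "cact w (fund s) = fund s" using cact_eqv[OF y(2) fund_supp[OF sI]] by simp
    then show ?thesis by (simp add: fund_def)
  next
    case False
    then obtain y' r where yy: "y = y' @ [r]" using y(3) by (metis length_0_conv rev_exhaust)
    have rI: "r \<in> I" and y'I: "set y' \<subseteq> I" using y(1) yy by auto
    have e1: "eqv w (y'@[r])" using y(2) yy eqv_sym by simp
    have "eqv (w@[r]) y'"
    proof -
      have "eqv (w@[r]) (y'@[r]@[r])" using eqv_app[OF e1 eqv_refl[of "[r]"]] by simp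
      also have "eqv \<dots> y'" using eqv_cancel[of y' r "[]"] by simp
      finally show ?thesis .
    qed
    hence lwr: "len (w@[r]) = len y'" by (rule len_eqv)
    have ly': "len y' \<le> len w - 1" using len_le_length[OF y'I] y(3) yy by simp
    have "r \<noteq> s" using ge lwr ly' False by auto
    define P where "P = (\<lambda>(v, u). set v \<subseteq> I \<and> set u \<subseteq> {s,r} \<and> eqv w (v@u) \<and> len w = len v + length u)"
    have "len w \<le> len y' + len [r]" using len_app[OF y'I, of "[r]"] rI len_eqv[OF e1] by simp
    hence "len w = len y' + 1" using ly' len_single[OF rI] False by linarith
    hence Py: "P (y', [r])" using y'I e1 by (simp add: P_def)
    obtain vu where Pvu: "P vu" and mn: "\<And>z. P z \<Longrightarrow> len (fst vu) \<le> len (fst z)"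
      using ex_has_least_nat[of P "(y', [r])" "\<lambda>z. len (fst z)", OF Py] by blast
    obtain v u where vu: "vu = (v,u)" by (cases vu)
    have vI: "set v \<subseteq> I" and uI: "set u \<subseteq> {s,r}" and ev: "eqv w (v@u)" and lv: "len w = len v + length u"
      using Pvu vu by (auto simp: P_def)
    have lvlt: "len v < len w" using mn[OF Py] vu \<open>len w = len y' + 1\<close> by simp
    have shift: "len v \<le> len (v@[a])" if aI: "a \<in> {s,r}" for a
    proof (rule ccontr)
      assume "\<not> len v \<le> len (v@[a])"
      hence lt: "len (v@[a]) < len v" by simp
      have aI': "a \<in> I" using aI sI rI by auto
      have "len v \<le> len (v@[a]) + 1" using len_snoc_ge[OF vI aI'] .
      hence eq: "len (v@[a]) + 1 = len v" using lt by simp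
      have "eqv w ((v@[a]) @ (a#u))"
      proof -
        have "eqv (v@[a,a]@u) (v@u)" by (rule eqv_cancel)
        hence "eqv (v@u) ((v@[a]) @ (a#u))" using eqv_sym by simp
        thus ?thesis using ev eqv_trans by blast
      qed
      hence "P (v@[a], a#u)" using vI aI' uI aI lv eq by (auto simp: P_def)
      hence "len v \<le> len (v@[a])" using mn vu by fastforce
      thus False using lt by simp
    qed
    have IHs: "\<forall>m. 0 \<le> cact v (fund s) m" using less.hyps[OF lvlt vI sI shift[of s]] by simp
    have IHr: "\<forall>m. 0 \<le> cact v (fund r) m" using less.hyps[OF lvlt vI rI shift[of r]] by simp
    have uI': "set u \<subseteq> I" using uI sI rI by auto
    have H1: "length u \<le> length u'" if "set u' \<subseteq> {s,r}" "eqv u' u" for u'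
    proof -
      have "eqv w (v@u')" using ev eqv_app[OF eqv_refl[of v] eqv_sym[OF that(2)]] eqv_trans by blast
      hence "len w = len (v@u')" by (rule len_eqv)
      also have "\<dots> \<le> len v + len u'" using len_app[OF vI] that(1) sI rI by auto
      also have "\<dots> \<le> len v + length u'" using len_le_length[of u'] that(1) sI rI by auto
      finally show ?thesis using lv by simp
    qed
    have H2: "length u \<le> length u'" if "set u' \<subseteq> {s,r}" "eqv u' (u@[s])" for u'
    proof -
      have "eqv (w@[s]) ((v@u)@[s])" using eqv_app[OF ev eqv_refl[of "[s]"]] .
      hence "eqv (w@[s]) (v@u')" using eqv_app[OF eqv_refl[of v] eqv_sym[OF that(2)]] eqv_trans by auto
      hence "len (w@[s]) = len (v@u')" by (rule len_eqv)
      also have "\<dots> \<le> len v + len u'" using len_app[OF vI] that(1) sI rI by auto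
      also have "\<dots> \<le> len v + length u'" using len_le_length[of u'] that(1) sI rI by auto
      finally show ?thesis using lv ge by simp
    qed
    have R: "0 \<le> cact u (fund s) s \<and> 0 \<le> cact u (fund s) r \<and>
         (\<forall>m. m \<noteq> s \<and> m \<noteq> r \<longrightarrow> cact u (fund s) m = 0)"
      using rank2[OF sI rI \<open>r \<noteq> s\<close>[symmetric] uI H1 H2] by blast
    define a where "a = cact u (fund s) s"
    define b where "b = cact u (fund s) r"
    have cu: "cact u (fund s) = addv (smul a (fund s)) (smul b (fund r))"
      using R \<open>r \<noteq> s\<close> by (auto simp: a_def b_def addv_def smul_def fund_def fun_eq_iff)
    have "cact w (fund s) = cact (v@u) (fund s)"
      using cact_eqv[OF ev fund_supp[OF sI]] .
    also have "\<dots> = addv (smul a (cact v (fund s))) (smul b (cact v (fund r)))"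
      by (simp add: cact_app cu cact_addv cact_smul)
    finally show ?thesis using IHs IHr R by (simp add: addv_def smul_def a_def b_def)
  qed
qed


lemma orbit_nonz: "s \<in> I \<Longrightarrow> \<exists>m. cact z (fund s) m \<noteq> 0"
proof (rule ccontr)
  assume sI: "s \<in> I" and "\<not> (\<exists>m. cact z (fund s) m \<noteq> 0)"
  hence "cact z (fund s) = smul 0 (fund s)" by (auto simp: smul_def fun_eq_iff)
  hence "cact (rev z) (cact z (fund s)) = smul 0 (cact (rev z) (fund s))" by (simp add: cact_smul)
  hence "fund s = smul 0 (cact (rev z) (fund s))" by (simp add: cact_rev_cancel)
  hence "fund s s = 0" by (simp add: smul_def)
  thus False by (simp add: fund_def)
qed

lemma cs_fund_self: "s \<in> I \<Longrightarrow> cs s (fund s) = smul (-1) (fund s)"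
  unfolding cs_def using pair_fund[of s "\<lambda>m. A m s"] A_diag[of s]
  by (auto simp: pair_def fun_eq_iff smul_def fund_def mult.commute)

lemma dichot: "set z \<subseteq> I \<Longrightarrow> s \<in> I \<Longrightarrow>
   (\<forall>m. 0 \<le> cact z (fund s) m) \<or> (\<forall>m. cact z (fund s) m \<le> 0)"
proof -
  assume zI: "set z \<subseteq> I" and sI: "s \<in> I"
  show ?thesis
  proof (cases "len z \<le> len (z@[s])")
    case True
    then show ?thesis using T_main[OF zI sI] by blast
  next
    case False
    have "eqv ((z@[s])@[s]) z" using eqv_cancel[of z s "[]"] by simp
    hence "len ((z@[s])@[s]) = len z" by (rule len_eqv)
    hence "\<forall>m. 0 \<le> cact (z@[s]) (fund s) m" using T_main[of "z@[s]" s] zI sI False by simp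
    hence "\<forall>m. 0 \<le> smul (-1) (cact z (fund s)) m"
      by (simp add: cact_app cs_fund_self[OF sI] cact_smul)
    thus ?thesis by (auto simp: smul_def)
  qed
qed

definition gam :: "nat list \<Rightarrow> nat \<Rightarrow> (nat \<Rightarrow> int)" where
  "gam x q = cact (rev (drop (Suc q) x)) (fund (x!q))"

lemma val_gam: "set x \<subseteq> I \<Longrightarrow> q < length x \<Longrightarrow>
   word_act t n (drop (Suc q) x) L (x!q) = pair L (gam x q)"
  unfolding gam_def using pair_word[of "drop (Suc q) x" L "fund (x!q)"] pair_fund2[of "x!q"]
  by (simp add: nth_mem subset_iff)

lemma pair_smul: "pair L (smul c d) = c * pair L d"
  by (simp add: pair_def smul_def sum_distrib_left algebra_simps)

lemma gam_pos: "reduced x \<Longrightarrow> q < length x \<Longrightarrow> \<forall>m. 0 \<le> gam x q m"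
proof -
  assume r: "reduced x" and q: "q < length x"
  have xI: "set x \<subseteq> I" using r by (simp add: reduced_def)
  have sI: "x!q \<in> I" using xI q by (simp add: nth_mem subset_iff)
  have dI: "set (rev (drop (Suc q) x)) \<subseteq> I" using xI by (auto dest: in_set_dropD)
  have d: "drop q x = x!q # drop (Suc q) x" using q by (simp add: Cons_nth_drop_Suc)
  have "reduced (rev (drop q x))" using r reduced_drop reduced_rev by blast
  hence "len (rev (drop (Suc q) x) @ [x!q]) = length x - q" using d q by (simp add: reduced_def)
  moreover have "len (rev (drop (Suc q) x)) \<le> length x - Suc q" using len_le_length[OF dI] by simp
  ultimately show ?thesis unfolding gam_def using T_main[OF dI sI] q by simp
qed

lemma gam_wneg: "reduced x \<Longrightarrow> q < length x \<Longrightarrow> \<forall>m. cact x (gam x q) m \<le> 0"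
proof -
  assume r: "reduced x" and q: "q < length x"
  have xI: "set x \<subseteq> I" using r by (simp add: reduced_def)
  have sI: "x!q \<in> I" using xI q by (simp add: nth_mem subset_iff)
  have tI: "set (take q x) \<subseteq> I" using xI by (auto dest: in_set_takeD)
  have tk: "take (Suc q) x = take q x @ [x!q]" using q by (simp add: take_Suc_conv_app_nth)
  have "cact x (gam x q) = cact (take (Suc q) x) (fund (x!q))"
    unfolding gam_def
    by (metis append_take_drop_id cact_app cact_rev_cancel2)
  also have "\<dots> = smul (-1) (cact (take q x) (fund (x!q)))"
    using tk by (simp add: cact_app cs_fund_self[OF sI] cact_smul)
  finally have e: "cact x (gam x q) = smul (-1) (cact (take q x) (fund (x!q)))" .
  have "reduced (take (Suc q) x)" using r reduced_take by blast
  hence "len (take q x @ [x!q]) = Suc q" using tk q by (simp add: reduced_def)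
  moreover have "len (take q x) \<le> q" using len_le_length[OF tI] by simp
  ultimately have "\<forall>m. 0 \<le> cact (take q x) (fund (x!q)) m" using T_main[OF tI sI] by simp
  thus ?thesis using e by (simp add: smul_def)
qed


lemma flip:
  assumes r: "reduced vs" and zI: "set z \<subseteq> I" and m0: "m0 \<in> I"
    and g: "g = cact z (fund m0)" and gp: "\<forall>m. 0 \<le> g m" and gn: "\<forall>m. cact vs g m \<le> 0"
  shows "\<exists>k < length vs. \<exists>c > 0. g = smul c (gam vs k)"
proof -
  have vI: "set vs \<subseteq> I" using r by (simp add: reduced_def)
  define P where "P = (\<lambda>k. k \<le> length vs \<and> (\<forall>m. 0 \<le> cact (drop k vs) g m))"
  have Pr: "P (length vs)" using gp by (simp add: P_def)
  define k0 where "k0 = (LEAST k. P k)"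
  have Pk0: "P k0" unfolding k0_def by (rule LeastI[of P, OF Pr])
  have k0ne: "k0 \<noteq> 0"
  proof
    assume "k0 = 0"
    hence "\<forall>m. 0 \<le> cact vs g m" using Pk0 by (simp add: P_def)
    hence "\<forall>m. cact vs g m = 0" using gn by (meson order_antisym)
    moreover have "\<exists>m. cact (vs @ z) (fund m0) m \<noteq> 0" by (rule orbit_nonz[OF m0])
    ultimately show False using g by (simp add: cact_app)
  qed
  then obtain k where kk: "k0 = Suc k" by (cases k0) auto
  have nPk: "\<not> P k" using not_less_Least[of k P] kk k0_def by simp
  have kl: "k < length vs" using Pk0 kk by (simp add: P_def)
  have dk: "drop k vs = vs!k # drop (Suc k) vs" using kl by (simp add: Cons_nth_drop_Suc)
  define j where "j = vs!k"
  have jI: "j \<in> I" using vI kl by (simp add: j_def nth_mem subset_iff)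
  define del where "del = cact (drop (Suc k) vs) g"
  have delp: "\<forall>m. 0 \<le> del m" using Pk0 kk by (simp add: P_def del_def)
  have "set (drop k vs @ z) \<subseteq> I" using vI zI by (auto dest: in_set_dropD)
  hence "(\<forall>m. 0 \<le> cact (drop k vs @ z) (fund m0) m) \<or> (\<forall>m. cact (drop k vs @ z) (fund m0) m \<le> 0)"
    using dichot m0 by blast
  hence "\<forall>m. cs j del m \<le> 0" using nPk kl g dk by (auto simp: P_def cact_app del_def j_def)
  hence off: "\<forall>m. m \<noteq> j \<longrightarrow> del m = 0"
    using delp by (metis cs_def fun_upd_other order_antisym)
  have "\<exists>m. del m \<noteq> 0" using orbit_nonz[OF m0, of "drop (Suc k) vs @ z"] g
    by (simp add: del_def cact_app)
  hence cpos: "del j > 0" using off delp by (metis order_less_le)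
  have dd: "del = smul (del j) (fund j)" using off by (auto simp: smul_def fund_def fun_eq_iff)
  have "g = cact (rev (drop (Suc k) vs)) del" by (simp add: del_def cact_rev_cancel)
  also have "\<dots> = smul (del j) (gam vs k)"
    by (subst dd) (simp add: cact_smul gam_def j_def)
  finally show ?thesis using kl cpos by blast
qed

lemma dist_lt:
  assumes r: "reduced x" and pp: "p < p'" "p' < length x" and c: "c1 > 0" "c2 > 0"
    and e: "smul c1 (gam x p) = smul c2 (gam x p')"
  shows False
proof -
  have xI: "set x \<subseteq> I" using r by (simp add: reduced_def)
  define y where "y = take (p' - Suc p) (drop (Suc p) x)"
  define j where "j = x!p'"
  have jI: "j \<in> I" using xI pp by (simp add: j_def nth_mem subset_iff)
  have sI: "x!p \<in> I" using xI pp by (simp add: nth_mem subset_iff)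
  have d1: "drop (Suc p) x = y @ (j # drop (Suc p') x)"
  proof -
    have "drop (Suc p) x = y @ drop (p' - Suc p) (drop (Suc p) x)" unfolding y_def by (rule append_take_drop_id[symmetric])
    also have "drop (p' - Suc p) (drop (Suc p) x) = drop p' x" using pp by simp
    also have "drop p' x = j # drop (Suc p') x" using pp by (simp add: j_def Cons_nth_drop_Suc)
    finally show ?thesis .
  qed
  define E where "E = cact (rev y) (fund (x!p))"
  define D where "D = drop (Suc p') x"
  have g1: "gam x p = cact (rev D) (cs j E)" by (simp add: gam_def d1 cact_app E_def D_def)
  have g2: "gam x p' = cact (rev D) (fund j)" by (simp add: gam_def D_def j_def)
  have "smul c1 (cs j E) = smul c2 (fund j)"
  proof -
    have "cact D (smul c1 (gam x p)) = cact D (smul c2 (gam x p'))" using e by simp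
    thus ?thesis by (simp add: g1 g2 cact_smul cact_rev_cancel2)
  qed
  hence "cs j (smul c1 (cs j E)) = cs j (smul c2 (fund j))" by simp
  hence "smul c1 E = smul c2 (smul (-1) (fund j))" by (simp add: cs_smul cs_invol cs_fund_self[OF jI])
  hence ej: "c1 * E j = - c2" by (simp add: smul_def fun_eq_iff fund_def)
  have yI: "set (rev y) \<subseteq> I" using xI by (auto simp: y_def dest: in_set_dropD in_set_takeD)
  have "x!p # y = take (p' - p) (drop p x)"
  proof -
    have "drop p x = x!p # drop (Suc p) x" using pp by (simp add: Cons_nth_drop_Suc)
    moreover have "p' - p = Suc (p' - Suc p)" using pp by simp
    ultimately show ?thesis by (simp add: y_def)
  qed
  hence "reduced (rev (x!p # y))" using r reduced_drop reduced_take reduced_rev by metis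
  hence "len (rev y @ [x!p]) = length y + 1" by (simp add: reduced_def)
  moreover have "len (rev y) \<le> length y" using len_le_length[OF yI] by simp
  ultimately have "\<forall>m. 0 \<le> E m" unfolding E_def using T_main[OF yI sI] by simp
  hence "0 \<le> c1 * E j" using c by simp
  thus False using ej c by simp
qed

lemma dist:
  assumes "reduced x" "p < length x" "p' < length x" "c1 > 0" "c2 > 0"
    and "smul c1 (gam x p) = smul c2 (gam x p')"
  shows "p = p'"
  using dist_lt[of x p p' c1 c2] dist_lt[of x p' p c2 c1] assms by (metis linorder_neqE_nat)


lemma minu_all:
  assumes rv: "reduced vs" and rw: "reduced ws" and e: "eqv vs ws"
    and v1: "\<forall>q<length vs. word_act t n (drop (Suc q) vs) L (vs!q) = 1"
  shows "\<forall>p<length ws. word_act t n (drop (Suc p) ws) L (ws!p) = 1"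
proof -
  have vI: "set vs \<subseteq> I" and wI: "set ws \<subseteq> I" using rv rw by (auto simp: reduced_def)
  have lenq: "length vs = length ws" using len_eqv[OF e] rv rw by (simp add: reduced_def)
  define r where "r = length ws"
  have ex: "\<forall>k<r. \<exists>p<r. \<exists>c>0. gam vs k = smul c (gam ws p)"
  proof (intro allI impI)
    fix k assume k: "k < r"
    hence kv: "k < length vs" using lenq r_def by simp
    have sI: "vs!k \<in> I" using vI kv by (simp add: nth_mem subset_iff)
    have dI: "set (rev (drop (Suc k) vs)) \<subseteq> I" using vI by (auto dest: in_set_dropD)
    have sup: "supp (gam vs k)" unfolding gam_def using cact_supp fund_supp[OF sI] by blast
    have "\<forall>m. cact ws (gam vs k) m \<le> 0"
      using gam_wneg[OF rv kv] cact_eqv[OF e sup] by simp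
    then show "\<exists>p<r. \<exists>c>0. gam vs k = smul c (gam ws p)"
      using flip[OF rw dI sI gam_def gam_pos[OF rv kv]] r_def by blast
  qed
  then obtain pi cc where pc: "\<forall>k<r. pi k < r \<and> cc k > 0 \<and> gam vs k = smul (cc k) (gam ws (pi k))"
    by metis
  have inj: "inj_on pi {..<r}"
  proof (rule inj_onI)
    fix k k' assume k: "k \<in> {..<r}" and k': "k' \<in> {..<r}" and eq: "pi k = pi k'"
    have "smul (cc k') (gam vs k) = smul (cc k) (gam vs k')"
      using pc k k' eq by (auto simp: smul_def fun_eq_iff)
    thus "k = k'" using dist[OF rv, of k k' "cc k'" "cc k"] pc k k' lenq r_def by auto
  qed
  have "pi ` {..<r} \<subseteq> {..<r}" using pc by auto
  hence surj: "pi ` {..<r} = {..<r}" using endo_inj_surj[OF _ _ inj] by simp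
  show ?thesis
  proof (intro allI impI)
    fix p assume p: "p < length ws"
    then obtain k where k: "k < r" and pk: "p = pi k" using surj r_def by (metis imageE lessThan_iff)
    have kv: "k < length vs" using k lenq r_def by simp
    have "word_act t n (drop (Suc k) vs) L (vs!k) = 1" using v1 kv by blast
    hence "1 = pair L (gam vs k)" using val_gam[OF vI kv, of L] by simp
    also have "\<dots> = cc k * pair L (gam ws p)" using pc k pk by (simp add: pair_smul)
    finally have "pair L (gam ws p) = 1" using pc k pos_zmult_eq_1_iff by (metis)
    thus "word_act t n (drop (Suc p) ws) L (ws!p) = 1" using val_gam[OF wI p] by simp
  qed
qed

lemma expand:
  "\<forall>q<length x. word_act t n (drop (Suc q) x) L (x!q) = 1 \<Longrightarrow>
   word_act t n x L = (\<lambda>j. L j - (\<Sum>b<length x. A j (x!b)))"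
proof (induction x)
  case Nil
  then show ?case by simp
next
  case (Cons a x)
  have h0: "word_act t n x L a = 1" using Cons.prems by force
  have hx: "\<forall>q<length x. word_act t n (drop (Suc q) x) L (x!q) = 1"
    using Cons.prems by force
  show ?case using Cons.IH[OF hx] h0
    by (auto simp del: sum.lessThan_Suc simp add: sref_def fun_eq_iff sum.lessThan_Suc_shift)
qed


end

theorem lemma6p5:
  fixes t :: ctype and n i :: nat
    and w :: "(nat \<Rightarrow> int) \<Rightarrow> (nat \<Rightarrow> int)" and ws :: "nat list"
  assumes "valid_type t n"
    and "i \<in> Kset t n"
    and "strong_minuscule t n w"
    and "Lambda_w t n w = fund i"
    and "reduced_expr t n w ws"
  shows "\<forall>p \<in> {1..length ws - 1}.
           (let u = card {a \<in> {p+1..length ws}. ws ! (a - 1) \<in> adj_s t n (ws ! (p - 1))} in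
              (ws ! (p - 1) = i \<longrightarrow> even u) \<and>
              (ws ! (p - 1) \<noteq> i \<longrightarrow> odd u \<and> u > 0))"
proof -
  interpret cx t n .
  have ex1: "\<exists>!Lam. Lam \<in> Pplus n \<and> lam_minuscule t n Lam w"
    using assms(3) by (simp add: strong_minuscule_def)
  have "Lambda_w t n w \<in> Pplus n \<and> lam_minuscule t n (Lambda_w t n w) w"
    unfolding Lambda_w_def by (rule theI'[OF ex1])
  hence "lam_minuscule t n (fund i) w" using assms(4) by simp
  then obtain vs where rv0: "reduced_expr t n w vs"
    and v1: "\<forall>q<length vs. word_act t n (drop (Suc q) vs) (fund i) (vs!q) = 1"
    by (auto simp: lam_minuscule_def)
  have rv: "reduced vs" and ev: "weyl_elt t n vs = w" using reduced_expr_iff[OF rv0] by auto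
  have rw: "reduced ws" and ew: "weyl_elt t n ws = w" using reduced_expr_iff[OF assms(5)] by auto
  have e: "eqv vs ws" using ev ew weyl_eq by metis
  have w1: "\<forall>p<length ws. word_act t n (drop (Suc p) ws) (fund i) (ws!p) = 1"
    using minu_all[OF rv rw e v1] .
  have wI: "set ws \<subseteq> I" using rw by (simp add: reduced_def)
  show ?thesis
  proof
    fix p assume pr: "p \<in> {1..length ws - 1}"
    define q where "q = p - 1"
    define j where "j = ws ! q"
    define r where "r = length ws"
    have q: "Suc q = p" "p < r" using pr by (auto simp: q_def r_def)
    define x where "x = drop p ws"
    have hx: "\<forall>b<length x. word_act t n (drop (Suc b) x) (fund i) (x!b) = 1"
    proof (intro allI impI)
      fix b assume "b < length x"
      hence "p + b < length ws" by (simp add: x_def)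
      hence "word_act t n (drop (Suc (p + b)) ws) (fund i) (ws!(p + b)) = 1" using w1 by blast
      thus "word_act t n (drop (Suc b) x) (fund i) (x!b) = 1" using q
        by (simp add: x_def add.commute r_def)
    qed
    have "q < length ws" using q by (simp add: r_def)
    hence "word_act t n (drop (Suc q) ws) (fund i) (ws!q) = 1" using w1 by blast
    hence "1 = word_act t n x (fund i) j" using q by (simp add: x_def j_def)
    also have "\<dots> = fund i j - (\<Sum>b<length x. A j (x!b))" using expand[OF hx] by simp
    finally have S: "(\<Sum>b<r - p. A j (ws!(p+b))) = fund i j - 1" by (simp add: x_def r_def)
    define B where "B = {b. b < r - p \<and> A j (ws!(p+b)) = -1}"
    have setq: "{a \<in> {p+1..length ws}. ws ! (a - 1) \<in> adj_s t n (ws ! (p - 1))} = (\<lambda>b. b + p + 1) ` B"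
    proof (rule set_eqI, rule iffI)
      fix a assume a: "a \<in> {a \<in> {p+1..length ws}. ws ! (a - 1) \<in> adj_s t n (ws ! (p - 1))}"
      hence "a - 1 - p < r - p" "A j (ws!(p + (a - 1 - p))) = -1" using q
        by (auto simp: adj_s_def j_def q_def r_def)
      hence "a - 1 - p \<in> B" by (simp add: B_def)
      moreover have "a = (a - 1 - p) + p + 1" using a by auto
      ultimately show "a \<in> (\<lambda>b. b + p + 1) ` B" by blast
    next
      fix a assume "a \<in> (\<lambda>b. b + p + 1) ` B"
      then obtain b where b: "b < r - p" "A j (ws!(p+b)) = -1" and ab: "a = b + p + 1"
        by (auto simp: B_def)
      have "ws!(p+b) \<in> I" using wI b(1) by (simp add: r_def nth_mem subset_iff)
      thus "a \<in> {a \<in> {p+1..length ws}. ws ! (a - 1) \<in> adj_s t n (ws ! (p - 1))}"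
        using b ab q by (auto simp: adj_s_def j_def q_def r_def add.commute)
    qed
    have cardu: "card {a \<in> {p+1..length ws}. ws ! (a - 1) \<in> adj_s t n (ws ! (p - 1))} = card B"
      unfolding setq by (rule card_image) (simp add: inj_on_def)
    have par: "even (\<Sum>b<r - p. A j (ws!(p+b))) \<longleftrightarrow> even (card B)"
      using even_sum_iff[of "{..<r-p}" "\<lambda>b. A j (ws!(p+b))"] by (simp add: A_odd B_def)
    have jp: "ws ! (p - 1) = j" by (simp add: j_def q_def)
    show "let u = card {a \<in> {p+1..length ws}. ws ! (a - 1) \<in> adj_s t n (ws ! (p - 1))} in
              (ws ! (p - 1) = i \<longrightarrow> even u) \<and>
              (ws ! (p - 1) \<noteq> i \<longrightarrow> odd u \<and> u > 0)"
    proof -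
      have c1: "j = i \<Longrightarrow> even (card B)" using par S by (simp add: fund_def)
      have c2: "j \<noteq> i \<Longrightarrow> odd (card B)" using par S by (simp add: fund_def)
      have c3: "j \<noteq> i \<Longrightarrow> card B > 0" using c2 by (cases "card B") auto
      show ?thesis using c1 c2 c3 cardu jp by (simp add: Let_def)
    qed
  qed
qed

end
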